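(* Let $a:\mathbb{R}\to\mathbb{R}$ be such that (C1) $a$ is continuous, and (C2) for every $T\in\mathbb{R}^+$ there exists $\varepsilon_T>0$ with $a(s)\ge\varepsilon_T$ for all $s\le T$. Define $Y_N(t)=\int_{-\infty}^{Nt}\exp\!\big(-\int_u^{Nt}a(\tfrac{s}{N})\,ds\big)\,L(du)$, $t\in\mathbb{R}$, $N\in\mathbb{N}$. Then $\{Y_N(t)\}_{N\in\mathbb{N}}$ is locally stationary with kernels $g_N^0(Nt,v)=\mathbb{1}_{\{v\ge0\}}\exp\!\big(-\int_{-v}^0 a(\tfrac{s}{N}+t)ds\big)$, limiting kernel $g(t,u)=\mathbb{1}_{\{u\ge0\}}e^{-a(t)u}$ and limiting transfer function $A(t,\mu)=\int_{\mathbb{R}}e^{-i\mu u}\mathbb{1}_{\{u\ge0\}}e^{-a(t)u}\,du$.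
   Context: $L$ is a two-sided real Lévy process ($L(t)=L_1(t)\mathbb{1}_{\{t\ge0\}}-L_2(-t)\mathbb{1}_{\{t<0\}}$, $L_1,L_2$ independent copies of a Lévy process) with $E[L(1)]=0$ and $E[L(1)^2]<\infty$; integrals are $L^2$-integrals. A sequence $\{Y_N(t),t\in\mathbb{R}\}_{N\in\mathbb{N}}$ is locally stationary if $Y_N(t)=\int_{\mathbb{R}}g_N^0(Nt,Nt-u)L(du)$ for all $t,N$, where $g_N^0:\mathbb{R}^2\to\mathbb{R}$, $g_N^0(Nt,\cdot)\in L^2(\mathbb{R})$, and there is $g:\mathbb{R}^2\to\mathbb{R}$ such that $t\mapsto g(t,\cdot)$ is continuous into $L^2(\mathbb{R})$ and $g_N^0(Nt,\cdot)\to g(t,\cdot)$ in $L^2(\mathbb{R})$ for every $t$; equivalently in the frequency domain with transfer functions given by the Fourier transforms $A_N^0(Nt,\mu)=\int e^{-i\mu u}g_N^0(Nt,u)du$, $A(t,\mu)=\int e^{-i\mu u}g(t,u)du$. *)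

theory Defs
  imports "HOL-Analysis.Analysis"
begin

definition sq_int :: "(real \<Rightarrow> real) \<Rightarrow> bool" where
  "sq_int f \<longleftrightarrow> f \<in> borel_measurable lborel \<and> integrable lborel (\<lambda>u. (f u)\<^sup>2)"

definition L2_dist_sq :: "(real \<Rightarrow> real) \<Rightarrow> (real \<Rightarrow> real) \<Rightarrow> real" where
  "L2_dist_sq f h = (\<integral>u. (f u - h u)\<^sup>2 \<partial>lborel)"

definition transfer :: "(real \<Rightarrow> real) \<Rightarrow> real \<Rightarrow> complex" where
  "transfer f \<mu> = (\<integral>u. exp (- \<i> * complex_of_real \<mu> * complex_of_real u) * complex_of_real (f u) \<partial>lborel)"

text \<open>A process Y_N(t) = int Y N t u L(du) is represented by its (deterministic) integrand
  Y N t :: real => real (index N ranges over N >= 1).\<close>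
definition locally_stationary ::
  "(nat \<Rightarrow> real \<Rightarrow> real \<Rightarrow> real) \<Rightarrow> (nat \<Rightarrow> real \<Rightarrow> real \<Rightarrow> real)
   \<Rightarrow> (real \<Rightarrow> real \<Rightarrow> real) \<Rightarrow> (real \<Rightarrow> real \<Rightarrow> complex) \<Rightarrow> bool" where
  "locally_stationary Y g0 g A \<longleftrightarrow>
     (\<forall>N t u. N \<ge> 1 \<longrightarrow> Y N t u = g0 N (real N * t) (real N * t - u)) \<and>
     (\<forall>N t. N \<ge> 1 \<longrightarrow> sq_int (g0 N (real N * t))) \<and>
     (\<forall>t. sq_int (g t)) \<and>
     (\<forall>t. ((\<lambda>s. L2_dist_sq (g s) (g t)) \<longlongrightarrow> 0) (at t)) \<and>
     (\<forall>t. (\<lambda>N. L2_dist_sq (g0 N (real N * t)) (g t)) \<longlonglongrightarrow> 0) \<and>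
     (\<forall>t \<mu>. A t \<mu> = transfer (g t) \<mu>)"

end

theory Submission
  imports Defs
begin

definition E :: "real \<Rightarrow> real \<Rightarrow> real" where
  "E c u = (if u \<ge> 0 then exp (- c * u) else 0)"

lemma E_meas[measurable]: "E c \<in> borel_measurable borel"
  unfolding E_def by measurable

lemma E_integrable: assumes "c > 0" shows "integrable lborel (E c)"
proof -
  have "((\<lambda>x. exp (-c*x)) has_integral exp (-c*0)/c) {0..}"
    by (rule has_integral_exp_minus_to_infinity) (rule assms)
  hence "((\<lambda>x. exp (-c*x)) has_integral 1/c) {0..}" by simp
  then have hE: "(E c has_integral 1/c) UNIV"
  proof -
    assume that: "((\<lambda>x. exp (-c*x)) has_integral 1/c) {0..}"
    have "(\<lambda>x. if x \<in> {0..} then exp (-c*x) else 0) = E c" by (auto simp: E_def fun_eq_iff)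
    thus ?thesis using has_integral_restrict_UNIV[of "{0::real..}" "\<lambda>x. exp (-c*x)"] that by simp
  qed
  have nn: "integral\<^sup>N lborel (E c) = 1/c"
    by (rule nn_integral_has_integral_lborel[OF E_meas _ hE]) (simp add: E_def)
  have ae: "AE x in lborel. 0 \<le> E c x" by (simp add: E_def)
  show ?thesis by (rule integrableI_nonneg[OF _ ae]) (simp_all add: nn)
qed

lemma k_cont: fixes f :: "real \<Rightarrow> real" assumes "continuous_on UNIV f"
  shows "continuous_on UNIV (\<lambda>x. integral {x..0} f)"
proof -
  have A: "continuous_on {..0} (\<lambda>x. integral {x..0} f)"
  proof (subst continuous_on_eq_continuous_within, intro ballI)
    fix x :: real assume x: "x \<in> {..0}"
    have "continuous_on {x-1..0} (\<lambda>x. integral {x..0} f)"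
      by (rule indefinite_integral_continuous_1')
         (rule integrable_continuous_interval, rule continuous_on_subset[OF assms], simp)
    hence c: "continuous (at x within {x-1..0}) (\<lambda>x. integral {x..0} f)"
      by (rule continuous_on_imp_continuous_within[OF _ subset_refl]) (use x in auto)
    have eq: "at x within {..0} = at x within {x-1..0}"
    proof (rule at_within_nhd[of _ "{x-1<..}"])
      show "x \<in> {x-1<..}" unfolding greaterThan_iff by linarith
      show "open {x-1<..}" by simp
      show "{..0} \<inter> {x - 1<..} - {x} = {x - 1..0} \<inter> {x - 1<..} - {x}" by auto
    qed
    show "continuous (at x within {..0}) (\<lambda>x. integral {x..0} f)"
      unfolding eq by (rule c)
  qed
  have B: "continuous_on {0..} (\<lambda>x. integral {x..0} f)"
  proof -
    have c0: "continuous_on {0..} (\<lambda>x::real. 0::real)" by (rule continuous_on_const)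
    have z: "integral {x..0} f = 0" if "x \<in> {0..}" for x :: real
    proof -
      have "x = 0 \<or> 0 < x" using that by auto
      thus ?thesis by (elim disjE) simp_all
    qed
    show ?thesis by (rule continuous_on_eq[OF c0]) (simp add: z)
  qed
  have "continuous_on ({..0} \<union> {0..}) (\<lambda>x. integral {x..0} f)"
    by (rule continuous_on_closed_Un[OF closed_atMost closed_atLeast A B])
  moreover have "{..0} \<union> {0::real..} = UNIV" by auto
  ultimately show ?thesis by (simp only:)
qed

lemma g0_meas: fixes f :: "real \<Rightarrow> real" assumes "continuous_on UNIV f"
  shows "(\<lambda>v. if v \<ge> 0 then exp (- integral {-v..0} f) else 0) \<in> borel_measurable borel"
proof -
  have "continuous_on UNIV (\<lambda>v. integral {-v..0} f)"
    by (rule continuous_on_compose2[OF k_cont[OF assms]]) (auto intro: continuous_intros)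
  hence [measurable]: "(\<lambda>v. integral {-v..0} f) \<in> borel_measurable borel"
    using borel_measurable_continuous_onI by blast
  show ?thesis by measurable
qed


lemma E_sq: "(E c u)^2 = E (2*c) u"
  by (auto simp: E_def power2_eq_square simp flip: exp_add)

lemma L2_conv:
  fixes h :: "nat \<Rightarrow> real \<Rightarrow> real" and h0 :: "real \<Rightarrow> real"
  assumes c: "c > 0"
  and meas: "\<And>n. h n \<in> borel_measurable borel" "h0 \<in> borel_measurable borel"
  and lim: "\<And>u. (\<lambda>n. h n u) \<longlonglongrightarrow> h0 u"
  and bnd: "eventually (\<lambda>n. \<forall>u. \<bar>h n u\<bar> \<le> E c u) sequentially"
  and bnd0: "\<And>u. \<bar>h0 u\<bar> \<le> E c u"
  shows "(\<lambda>n. \<integral>u. (h n u - h0 u)^2 \<partial>lborel) \<longlonglongrightarrow> 0"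
proof -
  from bnd obtain N where N: "\<And>n u. n \<ge> N \<Longrightarrow> \<bar>h n u\<bar> \<le> E c u"
    by (auto simp: eventually_sequentially)
  have "(\<lambda>n. \<integral>u. (h (n+N) u - h0 u)^2 \<partial>lborel) \<longlonglongrightarrow> (\<integral>u. (0::real) \<partial>(lborel::real measure))"
  proof (rule integral_dominated_convergence[where w="\<lambda>u. 4 * E (2*c) u" and M=lborel and f="\<lambda>u. 0" and s="\<lambda>n u. (h (n+N) u - h0 u)^2"])
    show "(\<lambda>u. 0::real) \<in> borel_measurable lborel" by simp
    show "(\<lambda>u. (h (n+N) u - h0 u)^2) \<in> borel_measurable lborel" for n
      using meas by simp
    show "integrable lborel (\<lambda>u. 4 * E (2*c) u)" using E_integrable c by simp
    show "AE u in lborel. (\<lambda>n. (h (n+N) u - h0 u)^2) \<longlonglongrightarrow> 0"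
    proof (rule AE_I2)
      fix u
      have "(\<lambda>n. h (n+N) u) \<longlonglongrightarrow> h0 u" using lim[of u] by (rule LIMSEQ_ignore_initial_segment)
      hence "(\<lambda>n. (h (n+N) u - h0 u)^2) \<longlonglongrightarrow> (h0 u - h0 u)^2"
        by (intro tendsto_intros)
      thus "(\<lambda>n. (h (n+N) u - h0 u)^2) \<longlonglongrightarrow> 0" by simp
    qed
    show "AE u in lborel. norm ((h (n+N) u - h0 u)^2) \<le> 4 * E (2*c) u" for n
    proof (rule AE_I2)
      fix u
      have a: "\<bar>h (n+N) u\<bar> \<le> E c u" using N by simp
      have b: "\<bar>h0 u\<bar> \<le> E c u" by (rule bnd0)
      have "\<bar>h (n+N) u - h0 u\<bar> \<le> 2 * E c u" using a b by linarith
      hence "\<bar>h (n+N) u - h0 u\<bar>^2 \<le> (2 * E c u)^2"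
        by (intro power_mono) auto
      thus "norm ((h (n+N) u - h0 u)^2) \<le> 4 * E (2*c) u"
        by (simp add: power_mult_distrib E_sq flip: E_sq)
    qed
  qed
  hence "(\<lambda>n. \<integral>u. (h (n+N) u - h0 u)^2 \<partial>lborel) \<longlonglongrightarrow> 0" by simp
  thus ?thesis by (rule LIMSEQ_offset)
qed

lemma int_lower:
  fixes f :: "real \<Rightarrow> real"
  assumes "continuous_on UNIV f" "v \<ge> 0" "\<And>s. s \<in> {-v..0} \<Longrightarrow> f s \<ge> e"
  shows "integral {-v..0} f \<ge> e * v"
proof -
  have "integral {-v..0} (\<lambda>s. e) \<le> integral {-v..0} f"
    by (rule integral_le) (auto intro!: integrable_continuous_interval continuous_on_subset[OF assms(1)] assms(3))
  thus ?thesis using assms(2) by (simp add: mult.commute)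
qed

lemma int_conv:
  fixes a :: "real \<Rightarrow> real"
  assumes C1: "continuous_on UNIV a" and v: "v \<ge> 0"
  shows "(\<lambda>N. integral {-v..0} (\<lambda>s. a (s / real N + real N * t / real N))) \<longlonglongrightarrow> v * a t"
proof (rule LIMSEQ_I)
  fix r :: real assume r: "r > 0"
  have "isCont a t" using C1 by (simp add: continuous_on_eq_continuous_at)
  then obtain d where d: "d > 0" "\<And>x. \<bar>x - t\<bar> < d \<Longrightarrow> \<bar>a x - a t\<bar> < r / (v+1)"
    using r v unfolding continuous_at_eps_delta dist_real_def
    by (metis divide_pos_pos add_nonneg_pos zero_less_one)
  obtain n :: nat where n: "v / d < n" using reals_Archimedean2 by blast
  show "\<exists>no. \<forall>N\<ge>no. norm (integral {-v..0} (\<lambda>s. a (s / real N + real N * t / real N)) - v * a t) < r"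
  proof (intro exI[of _ "max 1 n"] allI impI)
    fix N :: nat assume N: "max 1 n \<le> N"
    hence N1: "real N \<ge> 1" "real n \<le> real N" by auto
    have vN: "v / real N < d"
    proof -
      have "v < d * real n" using n d(1) by (simp add: field_simps)
      also have "\<dots> \<le> d * real N" using N1 d(1) by simp
      finally show ?thesis using N1 by (simp add: field_simps)
    qed
    let ?f = "\<lambda>s. a (s / real N + real N * t / real N)"
    have N0: "N \<noteq> 0" using N by auto
    hence eqf: "?f = (\<lambda>s. a (s / real N + t))" by simp
    have cf: "continuous_on UNIV ?f" unfolding eqf
      by (rule continuous_on_compose2[OF C1]) (use N0 in \<open>auto intro!: continuous_intros\<close>)
    have close: "\<bar>?f s - a t\<bar> \<le> r / (v+1)" if s: "s \<in> {-v..0}" for s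
    proof -
      have "\<bar>s / real N\<bar> \<le> v / real N" using s N1 by (auto simp: field_simps abs_if)
      hence "\<bar>(s / real N + t) - t\<bar> < d" using vN by simp
      from d(2)[OF this] show ?thesis using eqf by (metis less_imp_le)
    qed
    have int: "?f integrable_on {-v..0}"
      by (rule integrable_continuous_interval, rule continuous_on_subset[OF cf]) simp
    have c1: "?f s \<le> a t + r / (v+1)" if "s \<in> {-v..0}" for s
      using close[OF that] by linarith
    have c2: "a t - r / (v+1) \<le> ?f s" if "s \<in> {-v..0}" for s
      using close[OF that] by linarith
    have up: "integral {-v..0} ?f \<le> integral {-v..0} (\<lambda>s. a t + r / (v+1))"
      by (rule integral_le[OF int integrable_const_ivl c1])
    have lo: "integral {-v..0} (\<lambda>s. a t - r / (v+1)) \<le> integral {-v..0} ?f"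
      by (rule integral_le[OF integrable_const_ivl int c2])
    have "v * (r / (v+1)) < r" using v r by (simp add: field_simps)
    moreover have "v * (r / (v+1)) \<ge> 0" using v r by simp
    ultimately show "norm (integral {-v..0} ?f - v * a t) < r"
      using up lo v by (simp add: algebra_simps abs_less_iff)
  qed
qed


lemma E_mono: "c \<le> d \<Longrightarrow> \<bar>E d u\<bar> \<le> E c u"
  by (auto simp: E_def intro!: mult_right_mono)

lemma cont_f: assumes C1: "continuous_on UNIV a"
  shows "continuous_on UNIV (\<lambda>s. a (s / real N + x / real N))"
  by (rule continuous_on_compose2[OF C1]) (auto simp: divide_inverse intro!: continuous_intros)

lemma g0_bound:
  fixes a :: "real \<Rightarrow> real"
  assumes C1: "continuous_on UNIV a" and e: "\<And>s. s \<le> t \<Longrightarrow> a s \<ge> e" and N: "N \<ge> 1"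
  shows "\<bar>(if v \<ge> 0 then exp (- integral {-v..0} (\<lambda>s. a (s / real N + real N * t / real N))) else 0)\<bar>
         \<le> E e v"
proof (cases "v \<ge> 0")
  case True
  have "integral {-v..0} (\<lambda>s. a (s / real N + real N * t / real N)) \<ge> e * v"
  proof (rule int_lower[OF cont_f[OF C1] True])
    fix s assume s: "s \<in> {-v..0}"
    have "s / real N \<le> 0" using s N by (simp add: divide_nonpos_pos)
    moreover have "real N * t / real N = t" using N by simp
    ultimately show "a (s / real N + real N * t / real N) \<ge> e" using e by simp
  qed
  thus ?thesis using True by (simp add: E_def)
qed (simp add: E_def)

theorem proposition4:
  fixes a :: "real \<Rightarrow> real"
  assumes C1: "continuous_on UNIV a"
    and C2: "\<forall>T>0. \<exists>\<epsilon>>0. \<forall>s\<le>T. a s \<ge> \<epsilon>"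
  shows "locally_stationary
     (\<lambda>N t u. if u \<le> real N * t
               then exp (- integral {u..real N * t} (\<lambda>s. a (s / real N))) else 0)
     (\<lambda>N x v. if v \<ge> 0
               then exp (- integral {-v..0} (\<lambda>s. a (s / real N + x / real N))) else 0)
     (\<lambda>t u. if u \<ge> 0 then exp (- a t * u) else 0)
     (\<lambda>t \<mu>. \<integral>u. exp (- \<i> * complex_of_real \<mu> * complex_of_real u) *
              complex_of_real (if u \<ge> 0 then exp (- a t * u) else 0) \<partial>lborel)"
proof -
  have epsT: "\<exists>e>0. \<forall>s\<le>t. a s \<ge> e" for t
  proof -
    obtain e where "e > 0" "\<forall>s\<le>max 1 t. a s \<ge> e" using C2 by (meson less_max_iff_disj zero_less_one)
    thus ?thesis by (meson max.coboundedI2 order_trans)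
  qed
  have apos: "a t > 0" for t using epsT[of t] by force
  have gE: "(\<lambda>u. if u \<ge> 0 then exp (- a t * u) else 0) = E (a t)" for t
    by (simp add: E_def fun_eq_iff)
  have isC: "isCont a t" for t using C1 by (simp add: continuous_on_eq_continuous_at)
  let ?G = "\<lambda>N t v. if v \<ge> 0
               then exp (- integral {-v..0} (\<lambda>s. a (s / real N + real N * t / real N))) else 0"
  show ?thesis unfolding locally_stationary_def
  proof (intro conjI allI impI)
    fix N :: nat and t u :: real assume N: "N \<ge> 1"
    show "(if u \<le> real N * t then exp (- integral {u..real N * t} (\<lambda>s. a (s / real N))) else 0) =
          (if real N * t - u \<ge> 0
           then exp (- integral {-(real N * t - u)..0} (\<lambda>s. a (s / real N + real N * t / real N))) else 0)"
    proof (cases "u \<le> real N * t")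
      case True
      let ?f = "\<lambda>s. a (s / real N)"
      let ?c = "real N * t"
      have cf: "continuous_on UNIV ?f"
        by (rule continuous_on_compose2[OF C1]) (auto simp: divide_inverse intro!: continuous_intros)
      have "(?f has_integral integral {u..?c} ?f) {u..?c}"
        by (rule integrable_integral, rule integrable_continuous_interval, rule continuous_on_subset[OF cf]) simp
      hence "(?f has_integral integral {u..?c} ?f) {-(?c - u) + ?c..0 + ?c}" by simp
      hence "((?f \<circ> (+) ?c) has_integral integral {u..?c} ?f) {-(?c - u)..0}"
        using has_integral_shift_Icc_real by blast
      moreover have "(?f \<circ> (+) ?c) = (\<lambda>s. a (s / real N + real N * t / real N))"
        by (simp add: o_def add_divide_distrib add.commute)
      ultimately have "integral {-(?c - u)..0} (\<lambda>s. a (s / real N + real N * t / real N)) = integral {u..?c} ?f"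
        by (simp add: integral_unique)
      thus ?thesis using True by simp
    qed simp
  next
    fix N :: nat and t :: real assume N: "N \<ge> 1"
    obtain e where e: "e > 0" "\<And>s. s \<le> t \<Longrightarrow> a s \<ge> e" using epsT[of t] by blast
    have m: "?G N t \<in> borel_measurable borel"
      by (rule g0_meas[OF cont_f[OF C1]])
    show "sq_int (?G N t)"
      unfolding sq_int_def
    proof
      show "?G N t \<in> borel_measurable lborel" using m by simp
      show "integrable lborel (\<lambda>v. (?G N t v)^2)"
      proof (rule Bochner_Integration.integrable_bound[OF E_integrable[of "2*e"]])
        show "2 * e > 0" using e by simp
        show "(\<lambda>v. (?G N t v)^2) \<in> borel_measurable lborel" using m by simp
        show "AE v in lborel. norm ((?G N t v)^2) \<le> norm (E (2*e) v)"
        proof (rule AE_I2)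
          fix v
          have "\<bar>?G N t v\<bar> \<le> E e v" by (rule g0_bound[OF C1 e(2) N])
          hence "\<bar>?G N t v\<bar>^2 \<le> (E e v)^2" by (intro power_mono) auto
          moreover have "norm ((?G N t v)^2) = \<bar>?G N t v\<bar>^2" by simp
          moreover have "norm (E (2*e) v) = (E e v)^2" by (simp only: E_sq[symmetric] real_norm_def abs_power2)
          ultimately show "norm ((?G N t v)^2) \<le> norm (E (2*e) v)" by simp
        qed
      qed
    qed
  next
    fix t
    show "sq_int (\<lambda>u. if u \<ge> 0 then exp (- a t * u) else 0)"
      unfolding gE sq_int_def E_sq using E_integrable[of "2 * a t"] apos[of t] by simp
  next
    fix t
    show "((\<lambda>s. L2_dist_sq (\<lambda>u. if u \<ge> 0 then exp (- a s * u) else 0)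
                           (\<lambda>u. if u \<ge> 0 then exp (- a t * u) else 0)) \<longlongrightarrow> 0) (at t)"
      unfolding gE L2_dist_sq_def tendsto_at_iff_sequentially o_def
    proof (intro allI impI)
      fix X :: "nat \<Rightarrow> real" assume X: "X \<longlonglongrightarrow> t"
      have aX: "(\<lambda>n. a (X n)) \<longlonglongrightarrow> a t" by (rule isCont_tendsto_compose[OF isC X])
      show "(\<lambda>n. LBINT u. (E (a (X n)) u - E (a t) u)\<^sup>2) \<longlonglongrightarrow> 0"
      proof (rule L2_conv[where c="a t / 2"])
        show "a t / 2 > 0" using apos[of t] by simp
        show "E (a (X n)) \<in> borel_measurable borel" for n by simp
        show "E (a t) \<in> borel_measurable borel" by simp
        show "(\<lambda>n. E (a (X n)) u) \<longlonglongrightarrow> E (a t) u" for u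
          unfolding E_def by (cases "u \<ge> 0") (auto intro!: tendsto_intros aX)
        have "eventually (\<lambda>n. a (X n) > a t / 2) sequentially"
          by (rule order_tendstoD(1)[OF aX]) (use apos[of t] in simp)
        thus "eventually (\<lambda>n. \<forall>u. \<bar>E (a (X n)) u\<bar> \<le> E (a t / 2) u) sequentially"
          by eventually_elim (auto intro!: E_mono)
        show "\<bar>E (a t) u\<bar> \<le> E (a t / 2) u" for u
          using apos[of t] by (auto simp: E_def mult_right_mono)
      qed
    qed
  next
    fix t
    obtain e where e: "e > 0" "\<And>s. s \<le> t \<Longrightarrow> a s \<ge> e" using epsT[of t] by blast
    show "(\<lambda>N. L2_dist_sq (?G N t) (\<lambda>u. if u \<ge> 0 then exp (- a t * u) else 0)) \<longlonglongrightarrow> 0"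
      unfolding gE L2_dist_sq_def
    proof (rule L2_conv[where c=e])
      show "e > 0" by (rule e)
      show "?G N t \<in> borel_measurable borel" for N
        by (rule g0_meas[OF cont_f[OF C1]])
      show "E (a t) \<in> borel_measurable borel" by simp
      show "(\<lambda>N. ?G N t u) \<longlonglongrightarrow> E (a t) u" for u
      proof (cases "u \<ge> 0")
        case True
        have "(\<lambda>N. exp (- integral {-u..0} (\<lambda>s. a (s / real N + real N * t / real N)))) \<longlonglongrightarrow> exp (- (u * a t))"
          by (intro tendsto_intros int_conv[OF C1 True])
        thus ?thesis using True by (simp add: E_def mult.commute)
      qed (simp add: E_def)
      have "eventually (\<lambda>N. N \<ge> (1::nat)) sequentially" by (rule eventually_ge_at_top)
      thus "eventually (\<lambda>N. \<forall>u. \<bar>?G N t u\<bar> \<le> E e u) sequentially"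
        by eventually_elim (use g0_bound[OF C1 e(2)] in blast)
      show "\<bar>E (a t) u\<bar> \<le> E e u" for u
        using e(2)[of t] by (auto simp: E_def mult_right_mono)
    qed
  next
    fix t \<mu>
    show "(LBINT u. exp (- \<i> * complex_of_real \<mu> * complex_of_real u) *
              complex_of_real (if u \<ge> 0 then exp (- a t * u) else 0)) =
          transfer (\<lambda>u. if u \<ge> 0 then exp (- a t * u) else 0) \<mu>"
      by (simp add: transfer_def)
  qed
qed

end
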